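(* Let $F$, $G$, $\Pi$ be as in the context. For $(\xi,z)\in\Sigma_N\times I$ and $(\omega,x)\in\Sigma_A\times I$ let $\nu_n(\xi,z)=\frac1n\sum_{i=0}^{n-1}\delta_{F^i(\xi,z)}$ and $\mu_n(\omega,x)=\frac1n\sum_{i=0}^{n-1}\delta_{G^i(\omega,x)}$. If $\nu_n(\Pi(\omega,x))\to\nu$ in the weak$*$ topology as $n\to\infty$ and $\mu$ is a weak$*$ limit point of the sequence $(\mu_n(\omega,x))_n$, then $\nu=\Pi_*\mu$.
   Context: $I=[0,1]$, $R(x)=1-x$. $F(\xi,p)=(\sigma(\xi),f_{\xi_0}(p))$ on $\Sigma_N\times I$, $\Sigma_N=\{1,\ldots,N\}^{\mathbb Z}$, with $f_i$ $C^1$-diffeomorphisms onto their images. $\mathcal I_P$ / $\mathcal I_R$: indices of orientation preserving / reversing $f_i$. $A=(a_{ij})_{i,j=1}^{2N}$ with $a_{ij}=1$ if ($i\in\mathcal I_P$, $j\le N$), or ($i\in\mathcal I_R$, $j>N$), or ($i-N\in\mathcal I_P$, $j>N$), or ($i-N\in\mathcal I_R$, $j\le N$), else $0$; $\Sigma_A$ the $A$-admissible sequences in $\{1,\ldots,2N\}^{\mathbb Z}$ with shift $\sigma_A$; $\pi(\omega)_n=\overline{\omega_n}$ ($\overline i=i$ for $i\le N$, $\overline i=i-N$ otherwise). $G(\omega,x)=(\sigma_A(\omega),g_{\omega_0}(x))$ with $g_i=f_i$, $g_{i+N}=R\circ f_i\circ R$ ($i\in\mathcal I_P$), $g_i=R\circ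 f_i$, $g_{i+N}=f_i\circ R$ ($i\in\mathcal I_R$). $C=\{\omega\colon\omega_0\le N\}$; $\Pi(\omega,x)=(\pi(\omega),x)$ if $\omega\in C$, $(\pi(\omega),R(x))$ otherwise. *)

theory Defs
  imports "HOL-Analysis.Analysis"
begin

type_synonym seq = "int \<Rightarrow> nat"

definition II :: "real set" where "II = {0..1}"

definition Rf :: "real \<Rightarrow> real" where "Rf x = 1 - x"

text \<open>C^1 diffeomorphism of I onto its image (contained in I): continuously
  differentiable on I with nowhere vanishing derivative (hence strictly monotone
  with C^1 inverse on the image).\<close>
definition C1_diffeo_into :: "(real \<Rightarrow> real) \<Rightarrow> bool" where
  "C1_diffeo_into h \<longleftrightarrow> h ` II \<subseteq> II \<and>
     (\<exists>h'. continuous_on II h' \<and>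
        (\<forall>x\<in>II. (h has_real_derivative h' x) (at x within II) \<and> h' x \<noteq> 0))"

definition SigmaN :: "nat \<Rightarrow> seq set" where
  "SigmaN N = {\<xi>. \<forall>n. \<xi> n \<in> {1..N}}"

definition shift :: "seq \<Rightarrow> seq" where "shift \<xi> = (\<lambda>n. \<xi> (n + 1))"

definition FF :: "(nat \<Rightarrow> real \<Rightarrow> real) \<Rightarrow> seq \<times> real \<Rightarrow> seq \<times> real" where
  "FF f z = (shift (fst z), f (fst z 0) (snd z))"

definition IP :: "nat \<Rightarrow> (nat \<Rightarrow> real \<Rightarrow> real) \<Rightarrow> nat set" where
  "IP N f = {i \<in> {1..N}. \<forall>x\<in>II. \<forall>y\<in>II. x < y \<longrightarrow> f i x < f i y}"

definition IR :: "nat \<Rightarrow> (nat \<Rightarrow> real \<Rightarrow> real) \<Rightarrow> nat set" where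
  "IR N f = {i \<in> {1..N}. \<forall>x\<in>II. \<forall>y\<in>II. x < y \<longrightarrow> f i x > f i y}"

definition adm :: "nat \<Rightarrow> (nat \<Rightarrow> real \<Rightarrow> real) \<Rightarrow> nat \<Rightarrow> nat \<Rightarrow> bool" where
  "adm N f i j \<longleftrightarrow>
     (i \<in> IP N f \<and> j \<le> N) \<or> (i \<in> IR N f \<and> j > N) \<or>
     (i > N \<and> i - N \<in> IP N f \<and> j > N) \<or> (i > N \<and> i - N \<in> IR N f \<and> j \<le> N)"

definition SigmaA :: "nat \<Rightarrow> (nat \<Rightarrow> real \<Rightarrow> real) \<Rightarrow> seq set" where
  "SigmaA N f = {\<omega>. \<forall>n. \<omega> n \<in> {1..2*N} \<and> adm N f (\<omega> n) (\<omega> (n + 1))}"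

definition bar :: "nat \<Rightarrow> nat \<Rightarrow> nat" where
  "bar N i = (if i \<le> N then i else i - N)"

definition piA :: "nat \<Rightarrow> seq \<Rightarrow> seq" where
  "piA N \<omega> = (\<lambda>n. bar N (\<omega> n))"

definition gg :: "nat \<Rightarrow> (nat \<Rightarrow> real \<Rightarrow> real) \<Rightarrow> nat \<Rightarrow> real \<Rightarrow> real" where
  "gg N f i = (if i \<le> N then (if i \<in> IP N f then f i else Rf \<circ> f i)
               else (if i - N \<in> IP N f then Rf \<circ> f (i - N) \<circ> Rf else f (i - N) \<circ> Rf))"

definition GG :: "nat \<Rightarrow> (nat \<Rightarrow> real \<Rightarrow> real) \<Rightarrow> seq \<times> real \<Rightarrow> seq \<times> real" where
  "GG N f z = (shift (fst z), gg N f (fst z 0) (snd z))"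

definition PiM :: "nat \<Rightarrow> seq \<times> real \<Rightarrow> seq \<times> real" where
  "PiM N z = (if fst z 0 \<le> N then (piA N (fst z), snd z) else (piA N (fst z), Rf (snd z)))"

text \<open>Empirical measure (1/n) sum_{i<n} delta_{T^i z}, as a Borel measure.\<close>
definition emp :: "('a::topological_space \<Rightarrow> 'a) \<Rightarrow> 'a \<Rightarrow> nat \<Rightarrow> 'a measure" where
  "emp T z n = distr (uniform_measure (count_space UNIV) {..<n}) borel (\<lambda>i. (T ^^ i) z)"

text \<open>Finite Borel measure on the ambient space, concentrated on the compact set K
  (i.e. an element of M(K)).\<close>
definition meas_on :: "'a::topological_space set \<Rightarrow> 'a measure \<Rightarrow> bool" where
  "meas_on K M \<longleftrightarrow> sets M = sets borel \<and> finite_measure M \<and> emeasure M (UNIV - K) = 0"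

definition weak_conv :: "(nat \<Rightarrow> 'a::topological_space measure) \<Rightarrow> 'a measure \<Rightarrow> bool" where
  "weak_conv Ms M \<longleftrightarrow> (\<forall>\<phi> :: 'a \<Rightarrow> real. continuous_on UNIV \<phi> \<and> bounded (range \<phi>) \<longrightarrow>
      (\<lambda>n. \<integral>x. \<phi> x \<partial>Ms n) \<longlonglongrightarrow> (\<integral>x. \<phi> x \<partial>M))"

end

theory Submission imports Defs "HOL-Analysis.Function_Metric" begin

lemma weak_unique:
  fixes M1 M2 :: "'a::metric_space measure"
  assumes s1: "sets M1 = sets borel" and s2: "sets M2 = sets borel"
    and f1: "finite_measure M1" and f2: "finite_measure M2"
    and eq: "\<And>\<phi>::'a\<Rightarrow>real. continuous_on UNIV \<phi> \<Longrightarrow> bounded (range \<phi>) \<Longrightarrow>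
       (\<integral>x. \<phi> x \<partial>M1) = (\<integral>x. \<phi> x \<partial>M2)"
  shows "M1 = M2"
proof -
  interpret A: finite_measure M1 by fact
  interpret B: finite_measure M2 by fact
  have sp1: "space M1 = UNIV" using s1 by (metis sets_eq_imp_space_eq space_borel)
  have sp2: "space M2 = UNIV" using s2 by (metis sets_eq_imp_space_eq space_borel)
  have lim: "(\<lambda>k. \<integral>x. max 0 (1 - real k * infdist x C) \<partial>M) \<longlonglongrightarrow> measure M C"
    if C: "closed C" "C \<noteq> {}" and sM: "sets M = sets borel" and fM: "finite_measure M" for M :: "'a measure" and C :: "'a set"
  proof -
    interpret finite_measure M by fact
    have Cm: "C \<in> sets M" using sM C by simp
    have "(\<lambda>k. \<integral>x. max 0 (1 - real k * infdist x C) \<partial>M) \<longlonglongrightarrow> (\<integral>x. indicator C x \<partial>M)"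
    proof (rule integral_dominated_convergence[where w="\<lambda>_. 1"])
      show "indicator C \<in> borel_measurable M" using Cm by simp
      show "(\<lambda>x. max 0 (1 - real k * infdist x C)) \<in> borel_measurable M" for k
        unfolding measurable_cong_sets[OF sM refl] by (intro borel_measurable_continuous_onI continuous_intros)
      show "integrable M (\<lambda>_. 1::real)" by simp
      show "AE x in M. norm (max 0 (1 - real k * infdist x C)) \<le> 1" for k
        by (auto intro!: AE_I2 simp: infdist_nonneg)
      show "AE x in M. (\<lambda>k. max 0 (1 - real k * infdist x C)) \<longlonglongrightarrow> indicator C x"
      proof (rule AE_I2)
        fix x
        show "(\<lambda>k. max 0 (1 - real k * infdist x C)) \<longlonglongrightarrow> indicator C x"
        proof (cases "x \<in> C")
          case True
          then show ?thesis by (simp add: infdist_zero)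
        next
          case False
          then have pos: "infdist x C > 0"
            using C in_closed_iff_infdist_zero infdist_nonneg by (metis less_eq_real_def)
          obtain k0 :: nat where k0: "real k0 > 1 / infdist x C" using reals_Archimedean2 by blast
          have "eventually (\<lambda>k. max 0 (1 - real k * infdist x C) = 0) sequentially"
          proof (rule eventually_sequentiallyI[of k0])
            fix k assume "k0 \<le> k"
            then have "real k > 1 / infdist x C" using k0 by linarith
            then have "real k * infdist x C > 1" using pos by (simp add: field_simps)
            then show "max 0 (1 - real k * infdist x C) = 0" by simp
          qed
          then show ?thesis using False
            by (simp add: tendsto_eventually)
        qed
      qed
    qed
    also have "(\<integral>x. indicator C x \<partial>M) = measure M C" using Cm by simp
    finally show ?thesis .
  qed
  show ?thesis
  proof (rule measure_eqI_generator_eq[where E="Collect closed" and \<Omega>=UNIV and A="\<lambda>_. UNIV"])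
    show "Int_stable (Collect closed)" by (auto simp: Int_stable_def)
    show "Collect closed \<subseteq> Pow UNIV" by auto
    show "sets M1 = sigma_sets UNIV (Collect closed)" using s1 by (simp add: borel_eq_closed)
    show "sets M2 = sigma_sets UNIV (Collect closed)" using s2 by (simp add: borel_eq_closed)
    show "range (\<lambda>_. UNIV) \<subseteq> Collect closed" by auto
    show "(\<Union>i. UNIV) = UNIV" by auto
    show "emeasure M1 UNIV \<noteq> \<infinity>" using A.emeasure_finite[of UNIV] by simp
    fix C :: "'a set" assume "C \<in> Collect closed"
    then have C: "closed C" by simp
    show "emeasure M1 C = emeasure M2 C"
    proof (cases "C = {}")
      case True then show ?thesis by simp
    next
      case False
      have "\<And>k. (\<integral>x. max 0 (1 - real k * infdist x C) \<partial>M1) = (\<integral>x. max 0 (1 - real k * infdist x C) \<partial>M2)"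
      proof (rule eq)
        fix k
        show "continuous_on UNIV (\<lambda>x. max 0 (1 - real k * infdist x C))"
          by (intro continuous_intros)
        show "bounded (range (\<lambda>x. max 0 (1 - real k * infdist x C)))"
          unfolding bounded_iff by (rule exI[of _ 1]) (auto simp: infdist_nonneg)
      qed
      note eqk = this
      have L1: "(\<lambda>k. \<integral>x. max 0 (1 - real k * infdist x C) \<partial>M2) \<longlonglongrightarrow> measure M1 C"
        using lim[OF C False s1 f1] unfolding eqk .
      have "measure M1 C = measure M2 C"
        by (rule LIMSEQ_unique[OF L1 lim[OF C False s2 f2]])
      then show ?thesis
        unfolding A.emeasure_eq_measure B.emeasure_eq_measure by simp
    qed
  qed
qed

definition emb :: "seq \<times> real \<Rightarrow> (int \<Rightarrow> real) \<times> real" where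
  "emb z = ((\<lambda>n. real (fst z n)), snd z)"
definition pemb :: "(int \<Rightarrow> real) \<times> real \<Rightarrow> seq \<times> real" where
  "pemb u = ((\<lambda>n. nat (floor (fst u n))), snd u)"

lemma cont_emb: "continuous_on UNIV emb"
proof -
  have "continuous_on UNIV (\<lambda>z::seq\<times>real. (\<lambda>n. real (fst z n)))"
  proof (intro continuous_on_coordinatewise_then_product)
    fix n
    have "continuous_on UNIV (\<lambda>z::seq\<times>real. fst z n)"
      by (intro continuous_on_compose2[OF continuous_on_product_coordinates continuous_on_fst]) auto
    moreover have "continuous_on UNIV (real :: nat \<Rightarrow> real)"
      by (simp add: continuous_on_discrete)
    ultimately show "continuous_on UNIV (\<lambda>z::seq\<times>real. real (fst z n))"
      using continuous_on_compose2 by blast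
  qed
  then show ?thesis unfolding emb_def[abs_def] by (rule continuous_on_Pair[OF _ continuous_on_snd[OF continuous_on_id]])
qed

lemma meas_pemb: "pemb \<in> borel_measurable borel"
proof -
  have 1: "(\<lambda>u::(int \<Rightarrow> real) \<times> real. (\<lambda>n. nat (floor (fst u n)))) \<in> borel_measurable borel"
  proof (rule measurable_coordinatewise_then_product)
    fix n
    have "continuous_on UNIV (\<lambda>u::(int \<Rightarrow> real) \<times> real. fst u n)"
      by (intro continuous_on_compose2[OF continuous_on_product_coordinates continuous_on_fst]) auto
    then have "(\<lambda>u::(int \<Rightarrow> real) \<times> real. fst u n) \<in> borel_measurable borel"
      by (rule borel_measurable_continuous_onI)
    then have "(\<lambda>u::(int \<Rightarrow> real) \<times> real. floor (fst u n)) \<in> measurable borel (count_space UNIV)"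
      by (rule measurable_compose[OF _ measurable_real_floor])
    then have "(\<lambda>u::(int \<Rightarrow> real) \<times> real. nat (floor (fst u n))) \<in> measurable borel (count_space UNIV)"
      by (rule measurable_compose) simp
    then show "(\<lambda>u::(int \<Rightarrow> real) \<times> real. nat (floor (fst u n))) \<in> borel_measurable borel"
      by (simp add: measurable_cong_sets[OF refl sets_borel_eq_count_space])
  qed
  have "pemb \<in> measurable borel (borel \<Otimes>\<^sub>M borel)"
    unfolding pemb_def[abs_def]
    by (rule measurable_Pair[OF 1 borel_measurable_continuous_onI[OF continuous_on_snd[OF continuous_on_id]]])
  then show ?thesis by (simp add: borel_prod)
qed

lemma pemb_emb: "pemb (emb z) = z"
  by (simp add: pemb_def emb_def)

lemma weak_unique2:
  fixes M1 M2 :: "(seq \<times> real) measure"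
  assumes s1: "sets M1 = sets borel" and s2: "sets M2 = sets borel"
    and f1: "finite_measure M1" and f2: "finite_measure M2"
    and eq: "\<And>\<phi>::seq \<times> real\<Rightarrow>real. continuous_on UNIV \<phi> \<Longrightarrow> bounded (range \<phi>) \<Longrightarrow>
       (\<integral>x. \<phi> x \<partial>M1) = (\<integral>x. \<phi> x \<partial>M2)"
  shows "M1 = M2"
proof -
  have me: "emb \<in> borel_measurable borel" by (rule borel_measurable_continuous_onI[OF cont_emb])
  have me1: "emb \<in> measurable M1 borel" using me by (simp add: measurable_cong_sets[OF s1 refl])
  have me2: "emb \<in> measurable M2 borel" using me by (simp add: measurable_cong_sets[OF s2 refl])
  have "distr M1 borel emb = distr M2 borel emb"
  proof (rule weak_unique)
    show "finite_measure (distr M1 borel emb)" by (rule finite_measure.finite_measure_distr[OF f1 me1])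
    show "finite_measure (distr M2 borel emb)" by (rule finite_measure.finite_measure_distr[OF f2 me2])
    fix \<psi> :: "(int \<Rightarrow> real) \<times> real \<Rightarrow> real"
    assume c: "continuous_on UNIV \<psi>" and b: "bounded (range \<psi>)"
    have m: "\<psi> \<in> borel_measurable borel" by (rule borel_measurable_continuous_onI[OF c])
    have c2: "continuous_on UNIV (\<lambda>z. \<psi> (emb z))"
      using continuous_on_compose2[OF c cont_emb] by simp
    have b2: "bounded (range (\<lambda>z. \<psi> (emb z)))"
      using b by (rule bounded_subset) auto
    show "(\<integral>x. \<psi> x \<partial>distr M1 borel emb) = (\<integral>x. \<psi> x \<partial>distr M2 borel emb)"
      using eq[OF c2 b2] integral_distr[OF me1 m] integral_distr[OF me2 m] by simp
  qed simp_all
  moreover have "distr (distr M borel emb) borel pemb = M" if "sets M = sets borel" for M :: "(seq \<times> real) measure"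
  proof -
    have "emb \<in> measurable M borel" using me by (simp add: measurable_cong_sets[OF that refl])
    then have "distr (distr M borel emb) borel pemb = distr M borel (pemb \<circ> emb)"
      by (rule distr_distr[OF meas_pemb])
    also have "\<dots> = distr M borel (\<lambda>x. x)" by (simp add: comp_def pemb_emb)
    also have "\<dots> = M" by (rule distr_id2[OF that[symmetric]])
    finally show ?thesis .
  qed
  ultimately show ?thesis using s1 s2 by metis
qed

lemma IP_IR_disj: "i \<in> IP N f \<Longrightarrow> i \<in> IR N f \<Longrightarrow> False"
proof -
  assume a: "i \<in> IP N f" "i \<in> IR N f"
  have "(0::real) \<in> II" "(1::real) \<in> II" by (auto simp: II_def)
  then show False using a unfolding IP_def IR_def
    by (metis (no_types, lifting) mem_Collect_eq not_less_iff_gr_or_eq zero_less_one)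
qed

lemma shift_SigmaA: "\<omega> \<in> SigmaA N f \<Longrightarrow> shift \<omega> \<in> SigmaA N f"
  unfolding SigmaA_def shift_def
proof (clarify, intro conjI)
  fix n
  assume h: "\<forall>n. \<omega> n \<in> {1..2 * N} \<and> adm N f (\<omega> n) (\<omega> (n + 1))"
  show "\<omega> (n + 1) \<in> {1..2 * N}" using h by blast
  have "adm N f (\<omega> (n + 1)) (\<omega> ((n + 1) + 1))" using h by blast
  then show "adm N f (\<omega> (n + 1)) (\<omega> (n + 1 + 1))" by simp
qed

lemma IP_le: "i \<in> IP N f \<Longrightarrow> i \<le> N" by (simp add: IP_def)
lemma IR_le: "i \<in> IR N f \<Longrightarrow> i \<le> N" by (simp add: IR_def)

lemma conj1:
  assumes "\<omega> \<in> SigmaA N f"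
  shows "PiM N (GG N f (\<omega>, y)) = FF f (PiM N (\<omega>, y))"
proof -
  have a: "\<omega> 0 \<in> {1..2*N}" "adm N f (\<omega> 0) (\<omega> 1)"
    using assms unfolding SigmaA_def by (auto dest: spec[of _ 0])
  have ps: "piA N (shift \<omega>) = shift (piA N \<omega>)" by (simp add: piA_def shift_def)
  have RR: "\<And>t. Rf (Rf t) = t" by (simp add: Rf_def)
  show ?thesis
    using a IP_IR_disj[of "\<omega> 0" N f] IP_IR_disj[of "\<omega> 0 - N" N f] IP_le[of "\<omega> 0" N f] IR_le[of "\<omega> 0" N f]
    unfolding GG_def FF_def PiM_def
    by (auto simp: ps RR adm_def gg_def shift_def piA_def bar_def)
qed

lemma iter_SigmaA: "fst z \<in> SigmaA N f \<Longrightarrow> fst ((GG N f ^^ i) z) \<in> SigmaA N f"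
  by (induction i) (auto simp: GG_def shift_SigmaA)

lemma iter_conj: "fst z \<in> SigmaA N f \<Longrightarrow> (FF f ^^ i) (PiM N z) = PiM N ((GG N f ^^ i) z)"
proof (induction i)
  case 0 then show ?case by simp
next
  case (Suc i)
  have "fst ((GG N f ^^ i) z) \<in> SigmaA N f" using iter_SigmaA Suc.prems by blast
  then have "PiM N (GG N f ((GG N f ^^ i) z)) = FF f (PiM N ((GG N f ^^ i) z))"
    using conj1[of "fst ((GG N f ^^ i) z)"] by (metis prod.collapse)
  then show ?case using Suc by simp
qed

lemma cont_PiM: "continuous_on UNIV (PiM N)"
proof -
  have c0: "continuous_on UNIV (\<lambda>z::seq\<times>real. fst z 0)"
    by (intro continuous_on_compose2[OF continuous_on_product_coordinates continuous_on_fst]) auto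
  have cpi: "continuous_on UNIV (\<lambda>z::seq\<times>real. piA N (fst z))"
    unfolding piA_def
  proof (intro continuous_on_coordinatewise_then_product)
    fix n
    have "continuous_on UNIV (\<lambda>z::seq\<times>real. fst z n)"
      by (intro continuous_on_compose2[OF continuous_on_product_coordinates continuous_on_fst]) auto
    moreover have "continuous_on UNIV (bar N)"
      by (simp add: continuous_on_discrete)
    ultimately show "continuous_on UNIV (\<lambda>z::seq\<times>real. bar N (fst z n))"
      using continuous_on_compose2 by blast
  qed
  have cl1: "closed {z::seq\<times>real. fst z 0 \<le> N}"
    by (rule closed_Collect_le[OF c0]) auto
  have cl2: "closed {z::seq\<times>real. \<not> fst z 0 \<le> N}"
    unfolding not_le by (rule closed_Collect_le[OF _ c0, where f="\<lambda>_. Suc N", unfolded Suc_le_eq]) auto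
  have "continuous_on ({z::seq\<times>real. fst z 0 \<le> N} \<union> {z. \<not> fst z 0 \<le> N})
     (\<lambda>z. if fst z 0 \<le> N then (piA N (fst z), snd z) else (piA N (fst z), Rf (snd z)))"
    by (rule continuous_on_cases[OF cl1 cl2]) (auto intro!: continuous_intros continuous_on_subset[OF cpi] simp: Rf_def)
  moreover have "{z::seq\<times>real. fst z 0 \<le> N} \<union> {z. \<not> fst z 0 \<le> N} = UNIV" by auto
  ultimately show ?thesis unfolding PiM_def[abs_def] by simp
qed

lemma meas_PiM: "PiM N \<in> borel_measurable borel"
  by (rule borel_measurable_continuous_onI[OF cont_PiM])

lemma emp_conj:
  assumes "fst z \<in> SigmaA N f"
  shows "emp (FF f) (PiM N z) n = distr (emp (GG N f) z n) borel (PiM N)"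
proof -
  let ?U = "uniform_measure (count_space UNIV) {..<n}"
  have m1: "(\<lambda>i. (GG N f ^^ i) z) \<in> measurable ?U borel"
    by (simp add: measurable_cong_sets[OF sets_uniform_measure refl])
  have "distr (emp (GG N f) z n) borel (PiM N) = distr ?U borel (PiM N \<circ> (\<lambda>i. (GG N f ^^ i) z))"
    unfolding emp_def by (rule distr_distr[OF meas_PiM m1])
  also have "\<dots> = emp (FF f) (PiM N z) n"
    unfolding emp_def by (rule distr_cong) (auto simp: iter_conj[OF assms])
  finally show ?thesis by simp
qed

theorem lemma3p28:
  fixes N :: nat and f :: "nat \<Rightarrow> real \<Rightarrow> real"
    and \<omega> :: seq and x :: real
    and \<nu> \<mu> :: "(seq \<times> real) measure"
  assumes "N \<ge> 1"
    and "\<forall>i\<in>{1..N}. C1_diffeo_into (f i)"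
    and "\<omega> \<in> SigmaA N f" and "x \<in> II"
    and "meas_on (SigmaN N \<times> II) \<nu>"
    and "weak_conv (emp (FF f) (PiM N (\<omega>, x))) \<nu>"
    and "meas_on (SigmaA N f \<times> II) \<mu>"
    and "\<exists>r. strict_mono r \<and> weak_conv (\<lambda>k. emp (GG N f) (\<omega>, x) (r k)) \<mu>"
  shows "\<nu> = distr \<mu> borel (PiM N)"
proof -
  obtain r where r: "strict_mono r" and wr: "weak_conv (\<lambda>k. emp (GG N f) (\<omega>, x) (r k)) \<mu>"
    using assms(8) by blast
  have snu: "sets \<nu> = sets borel" and fnu: "finite_measure \<nu>"
    using assms(5) by (auto simp: meas_on_def)
  have smu: "sets \<mu> = sets borel" and fmu: "finite_measure \<mu>"
    using assms(7) by (auto simp: meas_on_def)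
  have PiMmu: "PiM N \<in> measurable \<mu> borel"
    using meas_PiM by (simp add: measurable_cong_sets[OF smu refl])
  show ?thesis
  proof (rule weak_unique2)
    show "sets \<nu> = sets borel" by fact
    show "finite_measure \<nu>" by fact
    show "sets (distr \<mu> borel (PiM N)) = sets borel" by simp
    show "finite_measure (distr \<mu> borel (PiM N))"
      by (rule finite_measure.finite_measure_distr[OF fmu PiMmu])
    fix \<phi> :: "seq \<times> real \<Rightarrow> real"
    assume c: "continuous_on UNIV \<phi>" and b: "bounded (range \<phi>)"
    have mphi: "\<phi> \<in> borel_measurable borel" by (rule borel_measurable_continuous_onI[OF c])
    have L1: "(\<lambda>k. \<integral>z. \<phi> z \<partial>emp (FF f) (PiM N (\<omega>, x)) (r k)) \<longlonglongrightarrow> (\<integral>z. \<phi> z \<partial>\<nu>)"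
      using LIMSEQ_subseq_LIMSEQ[OF assms(6)[unfolded weak_conv_def, rule_format, OF conjI[OF c b]] r]
      by (simp add: comp_def)
    have c2: "continuous_on UNIV (\<lambda>z. \<phi> (PiM N z))"
      using continuous_on_compose2[OF c cont_PiM] by simp
    have b2: "bounded (range (\<lambda>z. \<phi> (PiM N z)))"
      using b by (rule bounded_subset) auto
    have L2: "(\<lambda>k. \<integral>z. \<phi> (PiM N z) \<partial>emp (GG N f) (\<omega>, x) (r k)) \<longlonglongrightarrow> (\<integral>z. \<phi> (PiM N z) \<partial>\<mu>)"
      using wr[unfolded weak_conv_def, rule_format, OF conjI[OF c2 b2]] .
    have eq: "(\<integral>z. \<phi> z \<partial>emp (FF f) (PiM N (\<omega>, x)) m) = (\<integral>z. \<phi> (PiM N z) \<partial>emp (GG N f) (\<omega>, x) m)" for m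
    proof -
      have "emp (FF f) (PiM N (\<omega>, x)) m = distr (emp (GG N f) (\<omega>, x) m) borel (PiM N)"
        using emp_conj[of "(\<omega>, x)"] assms(3) by simp
      moreover have "PiM N \<in> measurable (emp (GG N f) (\<omega>, x) m) borel"
        using meas_PiM by (simp add: emp_def)
      ultimately show ?thesis using integral_distr[OF _ mphi] by simp
    qed
    have "(\<integral>z. \<phi> z \<partial>\<nu>) = (\<integral>z. \<phi> (PiM N z) \<partial>\<mu>)"
      using LIMSEQ_unique[OF L1[unfolded eq] L2] .
    also have "\<dots> = (\<integral>z. \<phi> z \<partial>distr \<mu> borel (PiM N))"
      by (rule integral_distr[OF PiMmu mphi, symmetric])
    finally show "(\<integral>z. \<phi> z \<partial>\<nu>) = (\<integral>z. \<phi> z \<partial>distr \<mu> borel (PiM N))" .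
  qed
qed

end
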